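(* Let $(R,\mathfrak{m})$ satisfy condition $\bigstar$ with residue field $\mathbb{F}_q$, and suppose $\rho=\dim_{\mathbb{F}_q}\big(\mathfrak{m}/(\mathfrak{m}^2+pR)\big)$ is finite. Then the number of maximal subrings of $R$ with the same residue field as $R$ equals $\dfrac{q^{\rho}-1}{q-1}$ (in particular, it is $0$ when $\rho=0$).
   Context: All rings are commutative and unital. Condition $\bigstar$ on a ring $(R,\mathfrak{m})$: $R$ is a local ring (unique maximal ideal $\mathfrak{m}$, not necessarily Noetherian) of characteristic $p^N$ for a prime $p$ and some $N\ge 1$, with finite residue field $R/\mathfrak{m}\cong\mathbb{F}_q$, and $\mathfrak{m}$ is a nilpotent ideal. $\mathfrak{m}/(\mathfrak{m}^2+pR)$ is an $R/\mathfrak{m}$-vector space. A subring $S$ is local with $\mathfrak{m}_S=\mathfrak{m}\cap S$, its residue field naturally a subfield of $R/\mathfrak{m}$; a "maximal subring with the same residue field as $R$" is a proper subring with residue field $\mathbb{F}_q$ not properly contained in any other proper subring. *)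

theory Defs
  imports Main "HOL-Computational_Algebra.Primes"
begin

text \<open>All notions are relative to the ring R = UNIV of a type 'a :: comm_ring_1.\<close>

definition is_ideal :: "'a::comm_ring_1 set \<Rightarrow> bool" where
  "is_ideal I \<longleftrightarrow> 0 \<in> I \<and> (\<forall>x\<in>I. \<forall>y\<in>I. x + y \<in> I) \<and> (\<forall>x\<in>I. \<forall>r. r * x \<in> I)"

definition is_maximal_ideal :: "'a::comm_ring_1 set \<Rightarrow> bool" where
  "is_maximal_ideal M \<longleftrightarrow> is_ideal M \<and> M \<noteq> UNIV \<and>
     (\<forall>J. is_ideal J \<and> M \<subseteq> J \<longrightarrow> J = M \<or> J = UNIV)"

definition is_local_with :: "'a::comm_ring_1 set \<Rightarrow> bool" where
  "is_local_with m \<longleftrightarrow> is_maximal_ideal m \<and> (\<forall>M. is_maximal_ideal M \<longrightarrow> M = m)"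

text \<open>Nilpotent ideal: some power m^n is zero, i.e. all products of n elements of m vanish.\<close>
definition nilpotent_ideal :: "'a::comm_ring_1 set \<Rightarrow> bool" where
  "nilpotent_ideal I \<longleftrightarrow> (\<exists>n>0. \<forall>f::nat \<Rightarrow> 'a. (\<forall>i<n. f i \<in> I) \<longrightarrow> (\<Prod>i<n. f i) = 0)"

definition residue_classes :: "'a::comm_ring_1 set \<Rightarrow> 'a set set" where
  "residue_classes m = range (\<lambda>x. {y. x - y \<in> m})"

definition sq_plus_p :: "'a::comm_ring_1 set \<Rightarrow> nat \<Rightarrow> 'a set" where
  "sq_plus_p m p = {x. \<exists>(n::nat) f g r. (\<forall>i<n. f i \<in> m \<and> g i \<in> m) \<and>
                         x = (\<Sum>i<n. f i * g i) + of_nat p * r}"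

text \<open>m/(m^2+pR) has dimension \<rho> as an R/m-vector space: there are e_0..e_{\<rho>-1} in m
  whose classes form a basis (spanning and linearly independent over R/m).\<close>
definition cotangent_dim :: "'a::comm_ring_1 set \<Rightarrow> nat \<Rightarrow> nat \<Rightarrow> bool" where
  "cotangent_dim m p \<rho> \<longleftrightarrow> (\<exists>e::nat \<Rightarrow> 'a. (\<forall>i<\<rho>. e i \<in> m) \<and>
     (\<forall>x\<in>m. \<exists>a. x - (\<Sum>i<\<rho>. a i * e i) \<in> sq_plus_p m p) \<and>
     (\<forall>a. (\<Sum>i<\<rho>. a i * e i) \<in> sq_plus_p m p \<longrightarrow> (\<forall>i<\<rho>. a i \<in> m)))"

definition is_subring :: "'a::comm_ring_1 set \<Rightarrow> bool" where
  "is_subring S \<longleftrightarrow> 0 \<in> S \<and> 1 \<in> S \<and> (\<forall>x\<in>S. \<forall>y\<in>S. x + y \<in> S \<and> x * y \<in> S) \<and>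
     (\<forall>x\<in>S. - x \<in> S)"

text \<open>The residue field of S (naturally a subfield of R/m) is all of R/m, i.e. S + m = R.\<close>
definition same_residue_field :: "'a::comm_ring_1 set \<Rightarrow> 'a set \<Rightarrow> bool" where
  "same_residue_field m S \<longleftrightarrow> (\<forall>x. \<exists>s\<in>S. x - s \<in> m)"

definition maximal_subring_same_residue :: "'a::comm_ring_1 set \<Rightarrow> 'a set \<Rightarrow> bool" where
  "maximal_subring_same_residue m S \<longleftrightarrow> is_subring S \<and> S \<noteq> UNIV \<and> same_residue_field m S \<and>
     \<not> (\<exists>T. is_subring T \<and> T \<noteq> UNIV \<and> S \<subset> T)"

end

theory Submission
  imports Defs "HOL-Library.FuncSet"
begin

inductive inPw :: "'a::comm_ring_1 set \<Rightarrow> nat \<Rightarrow> 'a \<Rightarrow> bool" for m where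
  pz: "inPw m k 0"
| p0: "inPw m 0 x"
| pm: "inPw m k x \<Longrightarrow> y \<in> m \<Longrightarrow> inPw m (Suc k) (x*y)"
| pa: "inPw m k x \<Longrightarrow> inPw m k y \<Longrightarrow> inPw m k (x+y)"

locale L =
  fixes m :: "'a::comm_ring_1 set" and p :: nat and N :: nat and \<rho> :: nat
  assumes maxi: "is_maximal_ideal m"
  and pr: "prime p" and charp: "of_nat (p^N) = (0::'a)"
  and nil: "nilpotent_ideal m"
  and dim: "cotangent_dim m p \<rho>"
  and fin: "finite (residue_classes m)"
begin

abbreviation "J \<equiv> sq_plus_p m p"

lemma m_ideal: "is_ideal m" using maxi by (simp add: is_maximal_ideal_def)
lemma m_ne: "m \<noteq> UNIV" using maxi by (simp add: is_maximal_ideal_def)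
lemma m0: "0 \<in> m" using m_ideal by (simp add: is_ideal_def)
lemma m_add: "x \<in> m \<Longrightarrow> y \<in> m \<Longrightarrow> x + y \<in> m" using m_ideal by (simp add: is_ideal_def)
lemma m_mult: "x \<in> m \<Longrightarrow> r * x \<in> m" using m_ideal by (simp add: is_ideal_def)
lemma m_mult2: "x \<in> m \<Longrightarrow> x * r \<in> m" using m_mult by (metis mult.commute)
lemma m_neg: "x \<in> m \<Longrightarrow> - x \<in> m" using m_mult[of x "-1"] by simp
lemma m_diff: "x \<in> m \<Longrightarrow> y \<in> m \<Longrightarrow> x - y \<in> m" using m_add m_neg by (metis diff_conv_add_uminus)
lemma one_notin: "1 \<notin> m"
  using m_mult m_ne by (metis UNIV_eq_I mult.right_neutral)
lemma m_sum: "finite A \<Longrightarrow> (\<And>i. i \<in> A \<Longrightarrow> f i \<in> m) \<Longrightarrow> sum f A \<in> m"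
  by (induction A rule: finite_induct) (auto intro: m0 m_add)

lemma nilpot_elem: "x \<in> m \<Longrightarrow> \<exists>n. x ^ n = 0"
proof -
  assume x: "x \<in> m"
  obtain n where "n > 0" and h: "\<forall>f::nat \<Rightarrow> 'a. (\<forall>i<n. f i \<in> m) \<longrightarrow> (\<Prod>i<n. f i) = 0"
    using nil unfolding nilpotent_ideal_def by blast
  from h[rule_format, of "\<lambda>_. x"] x show ?thesis by auto
qed

lemma unit: assumes "x \<notin> m" shows "\<exists>y. x * y = 1"
proof -
  define I where "I = {a + r * x | a r. a \<in> m}"
  have "is_ideal I" unfolding is_ideal_def I_def
  proof (intro conjI ballI allI)
    show "0 \<in> {a + r * x |a r. a \<in> m}" using m0 by (metis (mono_tags, lifting) add_0 mem_Collect_eq mult_zero_left)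
  next
    fix u v assume "u \<in> {a + r * x |a r. a \<in> m}" "v \<in> {a + r * x |a r. a \<in> m}"
    then obtain a r b s where "u = a + r * x" "v = b + s * x" "a \<in> m" "b \<in> m" by blast
    moreover have "u + v = (a + b) + (r + s) * x" using \<open>u = a + r * x\<close> \<open>v = b + s * x\<close> by (simp add: algebra_simps)
    ultimately show "u + v \<in> {a + r * x |a r. a \<in> m}" using m_add by blast
  next
    fix u t assume "u \<in> {a + r * x |a r. a \<in> m}"
    then obtain a r where "u = a + r * x" "a \<in> m" by blast
    moreover have "t * u = (t * a) + (t * r) * x" using \<open>u = a + r * x\<close> by (simp add: algebra_simps)
    ultimately show "t * u \<in> {a + r * x |a r. a \<in> m}" using m_mult by blast
  qed
  moreover have "m \<subseteq> I" unfolding I_def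
  proof
    fix a assume "a \<in> m" moreover have "a = a + 0 * x" by simp
    ultimately show "a \<in> {a + r * x |a r. a \<in> m}" by blast
  qed
  ultimately have "I = m \<or> I = UNIV" using maxi unfolding is_maximal_ideal_def by blast
  moreover have "x \<in> I" unfolding I_def using m0 by (metis (mono_tags, lifting) add_0 mem_Collect_eq mult_1)
  ultimately have "1 \<in> I" using assms by auto
  then obtain a r where ar: "1 = a + r * x" "a \<in> m" unfolding I_def by blast
  obtain n where n: "a ^ n = 0" using nilpot_elem ar(2) by blast
  have "1 - a^n = (1 - a) * (\<Sum>i<n. a^i)" by (rule one_diff_power_eq)
  have rx: "r * x = 1 - a" using ar(1) by (metis add_diff_cancel_left')
  have "(1 - a) * (\<Sum>i<n. a^i) = 1" using one_diff_power_eq[of a n] n by simp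
  hence "x * (r * (\<Sum>i<n. a^i)) = 1" using rx by (metis mult.assoc mult.commute)
  thus ?thesis by blast
qed

lemma prime_m: "x * y \<in> m \<Longrightarrow> x \<notin> m \<Longrightarrow> y \<in> m"
  using unit m_mult by (metis mult.assoc mult.commute mult_1)

lemma pow_notin: "x \<notin> m \<Longrightarrow> x ^ n \<notin> m"
  by (induction n) (auto simp: one_notin dest: prime_m)

lemma pow_in: "x ^ n \<in> m \<Longrightarrow> x \<in> m" using pow_notin by blast

lemma p_in_m: "of_nat p \<in> (m::'a set)"
  using charp m0 pow_in by (metis of_nat_power)

lemma J_m: "x \<in> J \<Longrightarrow> x \<in> m"
  unfolding sq_plus_p_def using p_in_m
  by (auto intro!: m_add m_sum m_mult2)

lemma m2_J: "a \<in> m \<Longrightarrow> b \<in> m \<Longrightarrow> a * b \<in> J"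
  unfolding sq_plus_p_def
  by (intro CollectI exI[of _ "1"] exI[of _ "\<lambda>_. a"] exI[of _ "\<lambda>_. b"] exI[of _ 0]) auto

lemma pR_J: "of_nat p * r \<in> J"
  unfolding sq_plus_p_def
  by (intro CollectI exI[of _ "0"] exI[of _ "\<lambda>_. 0"] exI[of _ "\<lambda>_. 0"] exI[of _ r]) auto

lemma J_ideal: "is_ideal J"
  unfolding is_ideal_def
proof (intro conjI ballI allI)
  show "0 \<in> J" using pR_J[of 0] by simp
next
  fix x y assume "x \<in> J" "y \<in> J"
  obtain n f g r where
    x: "(\<forall>i<(n::nat). f i \<in> m \<and> g i \<in> m)" "x = (\<Sum>i<n. f i * g i) + of_nat p * r"
    using \<open>x \<in> J\<close> unfolding sq_plus_p_def by blast
  obtain n' f' g' r' where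
    y: "(\<forall>i<(n'::nat). f' i \<in> m \<and> g' i \<in> m)" "y = (\<Sum>i<n'. f' i * g' i) + of_nat p * r'"
    using \<open>y \<in> J\<close> unfolding sq_plus_p_def by blast
  define F where "F i = (if i < n then f i else f' (i - n))" for i
  define G where "G i = (if i < n then g i else g' (i - n))" for i
  have "(\<Sum>i<n+n'. F i * G i) = (\<Sum>i\<in>{0..<n}. F i * G i) + (\<Sum>i\<in>{n..<n+n'}. F i * G i)"
    using sum.atLeastLessThan_concat[of 0 n "n+n'" "\<lambda>i. F i * G i"] by (simp add: lessThan_atLeast0)
  also have "(\<Sum>i\<in>{n..<n+n'}. F i * G i) = (\<Sum>i\<in>{0..<n'}. F (i+n) * G (i+n))"
    using sum.shift_bounds_nat_ivl[of "\<lambda>i. F i * G i" 0 n n'] by (simp add: add.commute)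
  finally have "(\<Sum>i<n+n'. F i * G i) = (\<Sum>i<n. F i * G i) + (\<Sum>i<n'. F (n+i) * G (n+i))"
    by (simp add: lessThan_atLeast0 add.commute)
  also have "\<dots> = (\<Sum>i<n. f i * g i) + (\<Sum>i<n'. f' i * g' i)"
    by (simp add: F_def G_def)
  finally have "x + y = (\<Sum>i<n+n'. F i * G i) + of_nat p * (r + r')"
    using x y by (simp add: algebra_simps)
  moreover have "\<forall>i<n+n'. F i \<in> m \<and> G i \<in> m" using x y by (auto simp: F_def G_def)
  ultimately show "x + y \<in> J" unfolding sq_plus_p_def
    by (intro CollectI exI[of _ "n+n'"] exI[of _ F] exI[of _ G] exI[of _ "r+r'"]) simp
next
  fix x t assume "x \<in> J"
  then obtain n f g r where
    x: "(\<forall>i<(n::nat). f i \<in> m \<and> g i \<in> m)" "x = (\<Sum>i<n. f i * g i) + of_nat p * r"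
    unfolding sq_plus_p_def by blast
  have "t * x = (\<Sum>i<n. (t * f i) * g i) + of_nat p * (t * r)"
    using x by (simp add: algebra_simps sum_distrib_left)
  moreover have "\<forall>i<n. t * f i \<in> m \<and> g i \<in> m" using x m_mult by auto
  ultimately show "t * x \<in> J" unfolding sq_plus_p_def
    by (intro CollectI exI[of _ n] exI[of _ "\<lambda>i. t * f i"] exI[of _ g] exI[of _ "t*r"]) simp
qed

lemma J0: "0 \<in> J" using J_ideal by (simp add: is_ideal_def)
lemma J_add: "x \<in> J \<Longrightarrow> y \<in> J \<Longrightarrow> x + y \<in> J" using J_ideal by (simp add: is_ideal_def)
lemma J_mult: "x \<in> J \<Longrightarrow> r * x \<in> J" using J_ideal by (simp add: is_ideal_def)
lemma J_neg: "x \<in> J \<Longrightarrow> - x \<in> J" using J_mult[of x "-1"] by simp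
lemma J_diff: "x \<in> J \<Longrightarrow> y \<in> J \<Longrightarrow> x - y \<in> J" using J_add J_neg by (metis diff_conv_add_uminus)


lemma Pw_r: "inPw m k x \<Longrightarrow> inPw m k (r*x)"
proof (induction rule: inPw.induct)
  case (pz k) then show ?case using inPw.pz by simp
next
  case (p0 x) then show ?case by (rule inPw.p0)
next
  case (pm k x y) then show ?case using inPw.pm[of m k "r*x" y] by (simp add: mult.assoc)
next
  case (pa k x y) then show ?case using inPw.pa[of m k "r*x" "r*y"] by (simp add: distrib_left)
qed

lemma Pw_Suc: "inPw m (Suc k) x \<Longrightarrow> inPw m k x"
proof -
  have "inPw m k' x \<Longrightarrow> k' = Suc k \<Longrightarrow> inPw m k x" for k'
  proof (induction rule: inPw.induct)
    case (pz k0) then show ?case by (simp add: inPw.pz)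
  next
    case (p0 x) then show ?case by simp
  next
    case (pm k0 x y) then show ?case using Pw_r[of k x y] by (simp add: mult.commute)
  next
    case (pa k x y) then show ?case using inPw.pa by simp
  qed
  thus "inPw m (Suc k) x \<Longrightarrow> inPw m k x" by simp
qed

lemma Pw_le_aux: "inPw m (j + d) x \<Longrightarrow> inPw m j x"
  by (induction d) (auto dest: Pw_Suc)

lemma Pw_le: "inPw m k x \<Longrightarrow> j \<le> k \<Longrightarrow> inPw m j x"
  using Pw_le_aux[of j "k - j" x] by simp

lemma Pw_1: "y \<in> m \<Longrightarrow> inPw m 1 y"
  using inPw.pm[OF inPw.p0[of m 1], of y] by simp

lemma Pw_m: "inPw m (Suc k) x \<Longrightarrow> x \<in> m"
proof -
  have "inPw m k' x \<Longrightarrow> k' = Suc k \<Longrightarrow> x \<in> m" for k'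
  proof (induction arbitrary: k rule: inPw.induct)
    case (pz k) then show ?case using m0 by simp
  next
    case (p0 x) then show ?case by simp
  next
    case (pm k0 x y) then show ?case using m_mult by simp
  next
    case (pa k x y) then show ?case using m_add by simp
  qed
  thus "inPw m (Suc k) x \<Longrightarrow> x \<in> m" by simp
qed

lemma Pw_mul: "inPw m b y \<Longrightarrow> inPw m a x \<Longrightarrow> inPw m (a+b) (x*y)"
proof (induction rule: inPw.induct)
  case (pz k) then show ?case using inPw.pz by simp
next
  case (p0 y) then show ?case using Pw_r[of a x y] by (simp add: mult.commute)
next
  case (pm k y z) then show ?case using inPw.pm[of m "a+k" "x*y" z] by (simp add: mult.assoc)
next
  case (pa k y z) then show ?case using inPw.pa[of m "a+k" "x*y" "x*z"] by (simp add: distrib_left)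
qed

lemma Pw_sum: "finite A \<Longrightarrow> (\<And>i. i \<in> A \<Longrightarrow> inPw m k (f i)) \<Longrightarrow> inPw m k (sum f A)"
  by (induction A rule: finite_induct) (auto intro: inPw.pz inPw.pa)

lemma Pw_diff: "inPw m k x \<Longrightarrow> inPw m k y \<Longrightarrow> inPw m k (x - y)"
  using inPw.pa[of m k x "(-1)*y"] Pw_r[of k y "-1"] by simp

lemma Pw_nil: "\<exists>n. \<forall>x. inPw m n x \<longrightarrow> x = 0"
proof -
  obtain n where "n > 0" and h: "\<forall>f::nat \<Rightarrow> 'a. (\<forall>i<n. f i \<in> m) \<longrightarrow> (\<Prod>i<n. f i) = 0"
    using nil unfolding nilpotent_ideal_def by blast
  have key: "inPw m k x \<Longrightarrow> k + j = n \<Longrightarrow> (\<forall>i<j. g i \<in> m) \<Longrightarrow> x * (\<Prod>i<j. g i) = 0"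
    for k x j g
  proof (induction arbitrary: j g rule: inPw.induct)
    case (pz k) then show ?case by simp
  next
    case (p0 x) then show ?case using h by simp
  next
    case (pm k x y)
    let ?g = "g(j := y)"
    have "x * (\<Prod>i<Suc j. ?g i) = 0" using pm by (intro pm.IH) auto
    moreover have "(\<Prod>i<Suc j. ?g i) = (\<Prod>i<j. g i) * y"
      by (simp add: prod.lessThan_Suc)
    ultimately show ?case by (simp add: algebra_simps)
  next
    case (pa k x y) then show ?case by (simp add: distrib_right)
  qed
  show ?thesis
  proof (intro exI allI impI)
    fix x assume "inPw m n x"
    then show "x = 0" using key[of n x 0 "\<lambda>_. 0"] by simp
  qed
qed

end

lemma sub_0: "is_subring S \<Longrightarrow> 0 \<in> S" by (simp add: is_subring_def)
lemma sub_1: "is_subring S \<Longrightarrow> 1 \<in> S" by (simp add: is_subring_def)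
lemma sub_add: "is_subring S \<Longrightarrow> x \<in> S \<Longrightarrow> y \<in> S \<Longrightarrow> x + y \<in> S" by (simp add: is_subring_def)
lemma sub_mult: "is_subring S \<Longrightarrow> x \<in> S \<Longrightarrow> y \<in> S \<Longrightarrow> x * y \<in> S" by (simp add: is_subring_def)
lemma sub_neg: "is_subring S \<Longrightarrow> x \<in> S \<Longrightarrow> - x \<in> S" by (simp add: is_subring_def)
lemma sub_diff: "is_subring S \<Longrightarrow> x \<in> S \<Longrightarrow> y \<in> S \<Longrightarrow> x - y \<in> S"
  using sub_add sub_neg by (metis diff_conv_add_uminus)
lemma sub_of_nat: "is_subring S \<Longrightarrow> of_nat n \<in> S"
  by (induction n) (auto simp: sub_0 sub_1 sub_add)
lemma sub_pow: "is_subring S \<Longrightarrow> x \<in> S \<Longrightarrow> x ^ n \<in> S"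
  by (induction n) (auto simp: sub_1 sub_mult)

context L begin

lemma claimA:
  assumes S: "is_subring S" and res: "same_residue_field m S" and SJ: "\<forall>x. \<exists>s\<in>S. x - s \<in> J"
  shows "S = UNIV"
proof -
  have res': "\<exists>s\<in>S. x - s \<in> m" for x using res unfolding same_residue_field_def by blast
  have step0: "\<exists>s\<in>S. inPw m 2 (y - s)" if y: "y \<in> m" for y
  proof -
    obtain s where s: "s \<in> S" "y - s \<in> J" using SJ by blast
    then obtain n f g r where
      fg: "(\<forall>i<(n::nat). f i \<in> m \<and> g i \<in> m)" "y - s = (\<Sum>i<n. f i * g i) + of_nat p * r"
      unfolding sq_plus_p_def by blast
    obtain s2 where s2: "s2 \<in> S" "r - s2 \<in> m" using res' by blast
    have "inPw m 2 (\<Sum>i<n. f i * g i)"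
      using fg(1) Pw_mul[OF Pw_1 Pw_1] by (intro Pw_sum) (auto simp: numeral_2_eq_2)
    moreover have "inPw m 2 (of_nat p * (r - s2))"
      using Pw_mul[OF Pw_1[OF s2(2)] Pw_1[OF p_in_m]] by (simp add: numeral_2_eq_2)
    ultimately have "inPw m 2 ((\<Sum>i<n. f i * g i) + of_nat p * (r - s2))" by (rule inPw.pa)
    moreover have "(\<Sum>i<n. f i * g i) + of_nat p * (r - s2) = y - (s + of_nat p * s2)"
      using fg(2) by (simp add: algebra_simps)
    moreover have "s + of_nat p * s2 \<in> S" using S s s2 by (intro sub_add sub_mult sub_of_nat)
    ultimately show ?thesis by metis
  qed
  have B: "\<exists>s\<in>S. inPw m (Suc k) (x - s)" if "inPw m k x" for k x
    using that
  proof (induction rule: inPw.induct)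
    case (pz k) then show ?case using sub_0[OF S] inPw.pz by force
  next
    case (p0 x)
    then obtain s where "s \<in> S" "x - s \<in> m" using res' by blast
    then show ?case using Pw_1 by auto
  next
    case (pm k x y)
    obtain s where s: "s \<in> S" "inPw m (Suc k) (x - s)" using pm.IH by blast
    obtain s' where s': "s' \<in> S" "inPw m 2 (y - s')" using step0 pm.hyps(2) by blast
    have "y - s' \<in> m" using Pw_m[of 1 "y - s'"] s'(2) by (simp add: numeral_2_eq_2)
    hence "y - (y - s') \<in> m" using pm.hyps(2) m_diff by blast
    hence "s' \<in> m" by simp
    have "inPw m (k + 2) (x * (y - s'))" using Pw_mul[OF s'(2) pm.hyps(1)] .
    moreover have "inPw m (Suc k + 1) ((x - s) * s')" using Pw_mul[OF Pw_1[OF \<open>s' \<in> m\<close>] s(2)] .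
    ultimately have "inPw m (Suc (Suc k)) (x * (y - s') + (x - s) * s')"
      by (intro inPw.pa) auto
    moreover have "x * (y - s') + (x - s) * s' = x * y - s * s'" by (simp add: algebra_simps)
    moreover have "s * s' \<in> S" using S s s' by (intro sub_mult)
    ultimately show ?case by metis
  next
    case (pa k x y)
    obtain s where s: "s \<in> S" "inPw m (Suc k) (x - s)" using pa.IH by blast
    obtain s' where s': "s' \<in> S" "inPw m (Suc k) (y - s')" using pa.IH by blast
    have "inPw m (Suc k) ((x - s) + (y - s'))" using s s' by (intro inPw.pa)
    moreover have "(x - s) + (y - s') = (x + y) - (s + s')" by simp
    moreover have "s + s' \<in> S" using S s s' by (intro sub_add)
    ultimately show ?case by metis
  qed
  have C: "\<exists>s\<in>S. inPw m (k + j) (x - s)" if "inPw m k x" for k j x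
  proof (induction j)
    case 0 then show ?case using that sub_0[OF S] by force
  next
    case (Suc j)
    then obtain s where s: "s \<in> S" "inPw m (k + j) (x - s)" by blast
    then obtain s' where s': "s' \<in> S" "inPw m (Suc (k + j)) ((x - s) - s')" using B by blast
    have "(x - s) - s' = x - (s + s')" by simp
    moreover have "s + s' \<in> S" using S s s' by (intro sub_add)
    ultimately show ?case using s' by (metis add_Suc_right)
  qed
  obtain n where n: "\<forall>x. inPw m n x \<longrightarrow> x = 0" using Pw_nil by blast
  have "x \<in> S" for x
  proof -
    obtain s where "s \<in> S" "inPw m (0 + n) (x - s)" using C[OF inPw.p0] by blast
    thus "x \<in> S" using n by auto
  qed
  thus ?thesis by auto
qed


end
context L begin
lemma p_ge2: "p \<ge> 2" using pr by (simp add: prime_ge_2_nat)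

definition rep :: "'a \<Rightarrow> 'a" where
  "rep x = (if x \<in> m then 0 else (SOME y. y \<in> {z. x - z \<in> m}))"

lemma rep_cong: "x - rep x \<in> m"
proof (cases "x \<in> m")
  case True then show ?thesis by (simp add: rep_def)
next
  case False
  have "x \<in> {z. x - z \<in> m}" using m0 by simp
  hence "(SOME y. y \<in> {z. x - z \<in> m}) \<in> {z. x - z \<in> m}" by (rule someI)
  then show ?thesis using False by (simp add: rep_def)
qed

lemma rep_eq: assumes "x - y \<in> m" shows "rep x = rep y"
proof -
  have "x \<in> m \<longleftrightarrow> y \<in> m"
  proof
    assume "x \<in> m" hence "x - (x - y) \<in> m" using assms m_diff by blast
    thus "y \<in> m" by simp
  next
    assume "y \<in> m" hence "y + (x - y) \<in> m" using assms m_add by blast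
    thus "x \<in> m" by simp
  qed
  moreover have "{z. x - z \<in> m} = {z. y - z \<in> m}"
  proof -
    have "x - z \<in> m \<longleftrightarrow> y - z \<in> m" for z
    proof
      assume "x - z \<in> m" hence "(x - z) - (x - y) \<in> m" using assms m_diff by blast
      thus "y - z \<in> m" by simp
    next
      assume "y - z \<in> m" hence "(y - z) + (x - y) \<in> m" using assms m_add by blast
      thus "x - z \<in> m" by simp
    qed
    thus ?thesis by auto
  qed
  ultimately show ?thesis by (simp add: rep_def)
qed

lemma rep_0_iff: "rep x = 0 \<longleftrightarrow> x \<in> m"
  using rep_cong[of x] by (auto simp: rep_def)

lemma rep_eq_iff: "rep x = rep y \<longleftrightarrow> x - y \<in> m"
proof
  assume h: "rep x = rep y"
  have "x - y = (x - rep x) - (y - rep y)" using h by simp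
  thus "x - y \<in> m" using rep_cong m_diff by metis
qed (rule rep_eq)

lemma rep_rep: "rep (rep x) = rep x"
  using rep_cong[of x] m_neg by (intro rep_eq) (metis minus_diff_eq)

definition "Rep = range rep"
definition cls :: "'a \<Rightarrow> 'a set" where "cls y = {z. y - z \<in> m}"

lemma rep_in: "rep x \<in> Rep" unfolding Rep_def by simp

lemma Rep_rep: "y \<in> Rep \<Longrightarrow> rep y = y" unfolding Rep_def using rep_rep by auto

lemma cls_rep: "cls (rep x) = cls x"
proof -
  have "rep x - z \<in> m \<longleftrightarrow> x - z \<in> m" for z
  proof
    assume "rep x - z \<in> m"
    hence "(rep x - z) + (x - rep x) \<in> m" using rep_cong m_add by blast
    thus "x - z \<in> m" by simp
  next
    assume "x - z \<in> m"
    hence "(x - z) - (x - rep x) \<in> m" using rep_cong m_diff by blast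
    thus "rep x - z \<in> m" by simp
  qed
  thus ?thesis unfolding cls_def by auto
qed

lemma cls_inj: "inj_on cls Rep"
proof (rule inj_onI)
  fix a b assume ab: "a \<in> Rep" "b \<in> Rep" "cls a = cls b"
  have "b \<in> cls b" using m0 by (simp add: cls_def)
  hence "b \<in> cls a" using ab(3) by simp
  hence "a - b \<in> m" by (simp add: cls_def)
  hence "rep a = rep b" by (rule rep_eq)
  thus "a = b" using ab Rep_rep by metis
qed

lemma cls_Rep: "cls ` Rep = residue_classes m"
proof -
  have "residue_classes m = range cls" unfolding residue_classes_def cls_def by simp
  also have "\<dots> = cls ` Rep"
  proof (intro equalityI subsetI)
    fix C assume "C \<in> range cls"
    then obtain x where "C = cls x" by auto
    hence "C = cls (rep x)" using cls_rep by simp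
    thus "C \<in> cls ` Rep" using rep_in by blast
  qed auto
  finally show ?thesis by simp
qed

lemma Rep_finite: "finite Rep"
  using fin cls_Rep cls_inj by (metis finite_imageD)

lemma Rep_card: "card Rep = card (residue_classes m)"
  using cls_Rep cls_inj by (metis card_image)


lemma Rep_0: "0 \<in> Rep" using rep_in[of 0] rep_0_iff m0 by metis

lemma Rep_nz: "y \<in> Rep \<Longrightarrow> y \<noteq> 0 \<Longrightarrow> y \<notin> m"
  using Rep_rep rep_0_iff by metis

lemma frob_p: "\<exists>r. ((a::'a)+b)^p - a^p - b^p = of_nat p * r"
proof -
  define T where "T k = of_nat (p choose k) * a^k * b^(p-k)" for k
  have p1: "p \<ge> 1" using p_ge2 by simp
  have "{..p} = insert 0 (insert p {1..<p})" using p1 by auto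
  hence "(\<Sum>k\<le>p. T k) = T 0 + (T p + (\<Sum>k\<in>{1..<p}. T k))" using p1 by simp
  moreover have "T 0 = b^p" "T p = a^p" by (simp_all add: T_def)
  moreover have "T k = of_nat p * (of_nat ((p choose k) div p) * a^k * b^(p-k))" if "k \<in> {1..<p}" for k
  proof -
    have "p dvd (p choose k)" using that pr by (intro dvd_choose_prime) auto
    hence "p choose k = p * ((p choose k) div p)" by simp
    hence eq: "(of_nat (p choose k) :: 'a) = of_nat p * of_nat ((p choose k) div p)" by (metis of_nat_mult)
    show ?thesis unfolding T_def by (subst eq) (simp add: mult.assoc)
  qed
  ultimately have "(a+b)^p = a^p + b^p + of_nat p * (\<Sum>k\<in>{1..<p}. of_nat ((p choose k) div p) * a^k * b^(p-k))"
    unfolding binomial_ring[of a b p] T_def[symmetric] by (simp add: sum_distrib_left algebra_simps)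
  thus ?thesis by (metis add_diff_cancel_left' diff_diff_eq add.commute)
qed

lemma F_p: "(a+b)^p - a^p - b^p \<in> J" using frob_p pR_J by metis

lemma J_pow: "j \<in> J \<Longrightarrow> n \<ge> 1 \<Longrightarrow> j^n \<in> J"
  using J_mult[of j "j^(n-1)"] by (metis le_add_diff_inverse2 power_add power_one_right)

lemma F_cong: assumes "a - b \<in> J" shows "a^p - b^p \<in> J"
proof -
  have "(b + (a-b))^p - b^p - (a-b)^p \<in> J" by (rule F_p)
  moreover have "(a-b)^p \<in> J" using assms J_pow p_ge2 by simp
  ultimately have "((b + (a-b))^p - b^p - (a-b)^p) + (a-b)^p \<in> J" by (rule J_add)
  thus ?thesis by simp
qed

lemma F_pf: "(a+b)^(p^f) - a^(p^f) - b^(p^f) \<in> J"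
proof (induction f)
  case 0 then show ?case using J0 by simp
next
  case (Suc f)
  let ?X = "(a+b)^(p^f)" and ?A = "a^(p^f)" and ?B = "b^(p^f)"
  have "?X - (?A + ?B) \<in> J" using Suc by (simp add: diff_diff_eq)
  hence "?X^p - (?A + ?B)^p \<in> J" by (rule F_cong)
  moreover have "(?A + ?B)^p - ?A^p - ?B^p \<in> J" by (rule F_p)
  ultimately have "(?X^p - (?A + ?B)^p) + ((?A + ?B)^p - ?A^p - ?B^p) \<in> J" by (rule J_add)
  moreover have "?X^p = (a+b)^(p^Suc f)" "?A^p = a^(p^Suc f)" "?B^p = b^(p^Suc f)"
    by (simp_all add: power_mult[symmetric] mult.commute[of "p^f" p])
  ultimately show ?case by (simp add: algebra_simps)
qed

lemma frob_inj: assumes "a^p - b^p \<in> m" shows "a - b \<in> m"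
proof -
  have "(b + (a-b))^p - b^p - (a-b)^p \<in> m" using F_p J_m by blast
  hence "(a^p - b^p) - ((b + (a-b))^p - b^p - (a-b)^p) \<in> m" using assms m_diff by blast
  hence "(a-b)^p \<in> m" by simp
  thus ?thesis by (rule pow_in)
qed

lemma frob_inj_pf: "a^(p^f) - b^(p^f) \<in> m \<Longrightarrow> a - b \<in> m"
proof (induction f arbitrary: a b)
  case 0 then show ?case by simp
next
  case (Suc f)
  have "(a^p)^(p^f) - (b^p)^(p^f) \<in> m" using Suc.prems by (simp add: power_mult[symmetric])
  hence "a^p - b^p \<in> m" by (rule Suc.IH)
  thus ?case by (rule frob_inj)
qed

lemma pow_cong_m: "a - b \<in> m \<Longrightarrow> a^n - b^n \<in> m"
proof (induction n)
  case 0 then show ?case using m0 by simp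
next
  case (Suc n)
  have "a^Suc n - b^Suc n = a*(a^n - b^n) + (a - b)*b^n" by (simp add: algebra_simps)
  thus ?case using Suc m_add m_mult m_mult2 by metis
qed

lemma E_exists: "\<exists>f. f \<ge> 1 \<and> (\<forall>x. x^(p^f) - x \<in> m)"
proof -
  define g where "g j = restrict (\<lambda>x. rep (x^(p^j))) Rep" for j
  have "range g \<subseteq> Pi\<^sub>E Rep (\<lambda>_. Rep)" unfolding g_def by (auto simp: rep_in)
  moreover have "finite (Pi\<^sub>E Rep (\<lambda>_. Rep))" using Rep_finite by (simp add: finite_PiE)
  ultimately have "finite (range g)" by (rule finite_subset)
  hence "\<not> inj g" using finite_imageD infinite_UNIV_nat by blast
  then obtain a b where ab: "a \<noteq> b" "g a = g b" unfolding inj_def by blast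
  then obtain a b where ab: "a < b" "g a = g b"
    by (metis linorder_neq_iff)
  define f where "f = b - a"
  have "x - x^(p^f) \<in> m" for x
  proof -
    have "g a (rep x) = g b (rep x)" using ab by simp
    hence "rep ((rep x)^(p^a)) = rep ((rep x)^(p^b))" by (simp add: g_def rep_in)
    hence "(rep x)^(p^a) - (rep x)^(p^b) \<in> m" by (simp add: rep_eq_iff)
    moreover have "x^(p^a) - (rep x)^(p^a) \<in> m" "x^(p^b) - (rep x)^(p^b) \<in> m"
      using pow_cong_m rep_cong by blast+
    ultimately have "(x^(p^a) - (rep x)^(p^a)) + ((rep x)^(p^a) - (rep x)^(p^b)) - (x^(p^b) - (rep x)^(p^b)) \<in> m"
      using m_add m_diff by blast
    hence "x^(p^a) - x^(p^b) \<in> m" by simp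
    moreover have "x^(p^b) = (x^(p^f))^(p^a)"
      using ab(1) by (simp add: f_def power_mult[symmetric] power_add[symmetric])
    ultimately have "x^(p^a) - (x^(p^f))^(p^a) \<in> m" by simp
    thus ?thesis by (rule frob_inj_pf)
  qed
  hence "x^(p^f) - x \<in> m" for x using m_neg by (metis minus_diff_eq)
  moreover have "f \<ge> 1" using ab by (simp add: f_def)
  ultimately show ?thesis by blast
qed

end

lemma id0: "is_ideal U \<Longrightarrow> 0 \<in> U" by (simp add: is_ideal_def)
lemma id_add: "is_ideal U \<Longrightarrow> x \<in> U \<Longrightarrow> y \<in> U \<Longrightarrow> x + y \<in> U" by (simp add: is_ideal_def)
lemma id_mult: "is_ideal U \<Longrightarrow> x \<in> U \<Longrightarrow> r * x \<in> U" by (simp add: is_ideal_def)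
lemma id_mult2: "is_ideal U \<Longrightarrow> x \<in> U \<Longrightarrow> x * r \<in> U" using id_mult by (metis mult.commute)
lemma id_neg: "is_ideal U \<Longrightarrow> x \<in> U \<Longrightarrow> - x \<in> U" using id_mult[of U x "-1"] by simp
lemma id_diff: "is_ideal U \<Longrightarrow> x \<in> U \<Longrightarrow> y \<in> U \<Longrightarrow> x - y \<in> U"
  using id_add id_neg by (metis diff_conv_add_uminus)

context L begin

definition fE where "fE = (SOME f. f \<ge> 1 \<and> (\<forall>x. x^(p^f) - x \<in> m))"
definition E where "E = p^fE"

lemma fE: "fE \<ge> 1 \<and> (\<forall>x. x^(p^fE) - x \<in> m)"
  using someI_ex[OF E_exists] unfolding fE_def .

lemma E_ge2: "E \<ge> 2"
proof -
  have "p \<le> p^fE" using fE p_ge2 by (intro self_le_power) auto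
  thus ?thesis using p_ge2 unfolding E_def by linarith
qed

lemma E1: "x^E - x \<in> m" using fE unfolding E_def by blast

lemma E2: "((a::'a)+b)^E - a^E - b^E \<in> J" unfolding E_def by (rule F_pf)

lemma E3: assumes "x \<in> m" shows "x^E \<in> J"
proof -
  have "E = (E - 2) + 2" using E_ge2 by simp
  hence "x^E = x^(E-2) * x^2" by (metis power_add)
  hence "x^E = x^(E-2) * (x * x)" by (simp add: power2_eq_square)
  moreover have "x^(E-2) * (x * x) \<in> J" using J_mult m2_J assms by blast
  ultimately show ?thesis by simp
qed

lemma E5: assumes "a - b \<in> m" shows "a^E - b^E \<in> J"
proof -
  have "(b + (a-b))^E - b^E - (a-b)^E \<in> J" by (rule E2)
  moreover have "(a-b)^E \<in> J" using E3 assms by blast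
  ultimately have "((b + (a-b))^E - b^E - (a-b)^E) + (a-b)^E \<in> J" by (rule J_add)
  thus ?thesis by simp
qed

definition SU :: "'a set \<Rightarrow> 'a set" where "SU U = {x. x^E - x \<in> U}"

lemma SU_sub: assumes U: "is_ideal U" and JU: "J \<subseteq> U" shows "is_subring (SU U)"
  unfolding is_subring_def
proof (intro conjI ballI)
  have E0: "E > 0" using E_ge2 by simp
  show "0 \<in> SU U" using E0 id0[OF U] by (simp add: SU_def zero_power)
  show "1 \<in> SU U" using id0[OF U] by (simp add: SU_def)
next
  fix x y assume x: "x \<in> SU U" and y: "y \<in> SU U"
  hence x': "x^E - x \<in> U" and y': "y^E - y \<in> U" by (auto simp: SU_def)
  have "((x+y)^E - x^E - y^E) + (x^E - x) + (y^E - y) \<in> U"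
    using E2[of x y] JU x' y' U by (blast intro: id_add)
  thus "x + y \<in> SU U" by (simp add: SU_def algebra_simps)
  have "(x^E - x) * y^E + x * (y^E - y) \<in> U" using x' y' U by (blast intro: id_add id_mult id_mult2)
  moreover have "(x^E - x) * y^E + x * (y^E - y) = (x*y)^E - x*y" by (simp add: algebra_simps power_mult_distrib)
  ultimately show "x * y \<in> SU U" by (simp add: SU_def)
next
  fix x assume x: "x \<in> SU U"
  hence x': "x^E - x \<in> U" by (auto simp: SU_def)
  have "(x + (-x))^E - x^E - (-x)^E \<in> J" by (rule E2)
  moreover have "E > 0" using E_ge2 by simp
  ultimately have "- (x^E) - (-x)^E \<in> U" using JU by (auto simp: zero_power)
  hence "- (- (x^E) - (-x)^E) - (x^E - x) \<in> U" using x' U by (blast intro: id_diff id_neg)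
  thus "- x \<in> SU U" by (simp add: SU_def algebra_simps)
qed

lemma SU_res: assumes JU: "J \<subseteq> U" shows "same_residue_field m (SU U)"
  unfolding same_residue_field_def
proof
  fix x
  have "(x^E)^E - x^E \<in> J" using E5 E1 by blast
  hence "x^E \<in> SU U" using JU by (auto simp: SU_def)
  moreover have "x - x^E \<in> m" using E1 m_neg by (metis minus_diff_eq)
  ultimately show "\<exists>s\<in>SU U. x - s \<in> m" by blast
qed

lemma SU_m: assumes U: "is_ideal U" and JU: "J \<subseteq> U" and x: "x \<in> m"
  shows "x \<in> SU U \<longleftrightarrow> x \<in> U"
proof -
  have xE: "x^E \<in> U" using E3 x JU by blast
  show ?thesis
  proof
    assume "x \<in> SU U" hence "x^E - x \<in> U" by (simp add: SU_def)
    hence "x^E - (x^E - x) \<in> U" using xE U id_diff by blast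
    thus "x \<in> U" by simp
  next
    assume "x \<in> U" thus "x \<in> SU U" using xE U id_diff by (simp add: SU_def)
  qed
qed

lemma SU_cap: "is_ideal U \<Longrightarrow> J \<subseteq> U \<Longrightarrow> U \<subseteq> m \<Longrightarrow> SU U \<inter> m = U"
  using SU_m by blast

lemma S_eq: assumes S: "is_subring S" and JS: "J \<subseteq> S" and res: "same_residue_field m S"
  shows "S = SU (S \<inter> m)"
proof (intro equalityI subsetI)
  fix x assume x: "x \<in> S"
  have "x^E - x \<in> S" using S x by (intro sub_diff sub_pow)
  thus "x \<in> SU (S \<inter> m)" using E1 by (simp add: SU_def)
next
  fix x assume "x \<in> SU (S \<inter> m)"
  hence h: "x^E - x \<in> S" by (simp add: SU_def)
  obtain s where s: "s \<in> S" "x - s \<in> m" using res unfolding same_residue_field_def by blast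
  have "x^E - s^E \<in> S" using E5[OF s(2)] JS by blast
  moreover have "s^E \<in> S" using S s by (intro sub_pow)
  ultimately have "(x^E - s^E) + s^E \<in> S" using S by (rule sub_add[rotated])
  hence "x^E \<in> S" by simp
  hence "x^E - (x^E - x) \<in> S" using sub_diff[OF S _ h] by blast
  thus "x \<in> S" by simp
qed

lemma Sm_ideal: assumes S: "is_subring S" and JS: "J \<subseteq> S" and res: "same_residue_field m S"
  shows "is_ideal (S \<inter> m)"
  unfolding is_ideal_def
proof (intro conjI ballI allI)
  show "0 \<in> S \<inter> m" using sub_0[OF S] m0 by simp
next
  fix x y assume "x \<in> S \<inter> m" "y \<in> S \<inter> m"
  thus "x + y \<in> S \<inter> m" using S m_add by (auto intro: sub_add)
next
  fix x r assume x: "x \<in> S \<inter> m"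
  obtain s where s: "s \<in> S" "r - s \<in> m" using res unfolding same_residue_field_def by blast
  have "(r - s) * x \<in> S" using m2_J s x JS by blast
  moreover have "s * x \<in> S" using S s x by (auto intro: sub_mult)
  ultimately have "s * x + (r - s) * x \<in> S" using S by (intro sub_add)
  moreover have "s * x + (r - s) * x = r * x" by (simp add: algebra_simps)
  ultimately show "r * x \<in> S \<inter> m" using x m_mult by auto
qed

lemma max_J: assumes M: "maximal_subring_same_residue m S" shows "J \<subseteq> S"
proof -
  have S: "is_subring S" and SU: "S \<noteq> UNIV" and res: "same_residue_field m S"
    and mx: "\<not> (\<exists>T. is_subring T \<and> T \<noteq> UNIV \<and> S \<subset> T)"
    using M unfolding maximal_subring_same_residue_def by auto
  define T where "T = {s + j | s j. s \<in> S \<and> j \<in> J}"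
  have T: "is_subring T" unfolding is_subring_def
  proof (intro conjI ballI)
    show "0 \<in> T" unfolding T_def using sub_0[OF S] J0 by force
    show "1 \<in> T" unfolding T_def using sub_1[OF S] J0 by force
  next
    fix x y assume "x \<in> T" "y \<in> T"
    then obtain s j s' j' where xy: "x = s + j" "y = s' + j'" "s \<in> S" "j \<in> J" "s' \<in> S" "j' \<in> J"
      unfolding T_def by blast
    have "x + y = (s + s') + (j + j')" using xy by (simp add: algebra_simps)
    moreover have "s + s' \<in> S" "j + j' \<in> J" using xy S by (auto intro: sub_add J_add)
    ultimately show "x + y \<in> T" unfolding T_def by blast
    have "x * y = (s * s') + (s * j' + s' * j + j * j')" using xy by (simp add: algebra_simps)
    moreover have "s * s' \<in> S" "s * j' + s' * j + j * j' \<in> J" using xy S by (auto intro!: sub_mult J_add J_mult)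
    ultimately show "x * y \<in> T" unfolding T_def by blast
  next
    fix x assume "x \<in> T"
    then obtain s j where xy: "x = s + j" "s \<in> S" "j \<in> J" unfolding T_def by blast
    have "- x = (- s) + (- j)" using xy by simp
    moreover have "- s \<in> S" "- j \<in> J" using xy S by (auto intro: sub_neg J_neg)
    ultimately show "- x \<in> T" unfolding T_def by blast
  qed
  have ST: "S \<subseteq> T" unfolding T_def using J0 by force
  have "T \<noteq> UNIV"
  proof
    assume "T = UNIV"
    have "\<exists>s\<in>S. x - s \<in> J" for x
    proof -
      have "x \<in> T" using \<open>T = UNIV\<close> by simp
      then obtain s j where "x = s + j" "s \<in> S" "j \<in> J" unfolding T_def by blast
      thus ?thesis by (metis add_diff_cancel_left')
    qed
    hence "\<forall>x. \<exists>s\<in>S. x - s \<in> J" by blast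
    hence "S = UNIV" using claimA S res by blast
    thus False using SU by simp
  qed
  hence "S = T" using mx T ST by blast
  thus ?thesis unfolding T_def using sub_0[OF S] by force
qed

definition MaxU where "MaxU = {U. is_ideal U \<and> J \<subseteq> U \<and> U \<subseteq> m \<and> U \<noteq> m \<and>
   (\<forall>U'. is_ideal U' \<and> U \<subseteq> U' \<and> U' \<subseteq> m \<longrightarrow> U' = U \<or> U' = m)}"

lemma SU_inj: "inj_on SU MaxU"
proof (rule inj_onI)
  fix U V assume U: "U \<in> MaxU" and V: "V \<in> MaxU" and eq: "SU U = SU V"
  have "U = SU U \<inter> m" using U SU_cap unfolding MaxU_def by auto
  also have "\<dots> = SU V \<inter> m" using eq by simp
  also have "\<dots> = V" using V SU_cap unfolding MaxU_def by auto
  finally show "U = V" .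
qed

lemma SU_ne: assumes "is_ideal U" "J \<subseteq> U" "U \<subseteq> m" "U \<noteq> m" shows "SU U \<noteq> UNIV"
proof
  assume "SU U = UNIV"
  hence "SU U \<inter> m = m" by simp
  thus False using SU_cap assms by auto
qed

lemma maxsub_eq: "{S. maximal_subring_same_residue m S} = SU ` MaxU"
proof (intro equalityI subsetI)
  fix S assume "S \<in> {S. maximal_subring_same_residue m S}"
  hence M: "maximal_subring_same_residue m S" by simp
  have S: "is_subring S" and SU: "S \<noteq> UNIV" and res: "same_residue_field m S"
    and mx: "\<not> (\<exists>T. is_subring T \<and> T \<noteq> UNIV \<and> S \<subset> T)"
    using M unfolding maximal_subring_same_residue_def by auto
  have JS: "J \<subseteq> S" using max_J[OF M] .
  let ?U = "S \<inter> m"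
  have Sq: "S = SU ?U" using S_eq S JS res .
  have I: "is_ideal ?U" using Sm_ideal S JS res .
  have JU: "J \<subseteq> ?U" using JS J_m by auto
  have "?U \<noteq> m"
  proof
    assume "?U = m"
    hence "m \<subseteq> S" by auto
    have "x \<in> S" for x
    proof -
      obtain s where "s \<in> S" "x - s \<in> m" using res unfolding same_residue_field_def by blast
      hence "(x - s) + s \<in> S" using \<open>m \<subseteq> S\<close> S by (blast intro: sub_add)
      thus ?thesis by simp
    qed
    thus False using SU by auto
  qed
  moreover have "U' = ?U \<or> U' = m" if U': "is_ideal U'" "?U \<subseteq> U'" "U' \<subseteq> m" for U'
  proof (cases "U' = m")
    case False
    have JU': "J \<subseteq> U'" using JU U' by blast
    have "is_subring (SU U')" using SU_sub U'(1) JU' .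
    moreover have "SU U' \<noteq> UNIV" using SU_ne U' JU' False by blast
    moreover have "S \<subseteq> SU U'"
    proof
      fix x assume "x \<in> S" hence "x \<in> SU ?U" using Sq by simp
      thus "x \<in> SU U'" using U' by (auto simp: SU_def)
    qed
    ultimately have "SU U' = S" using mx by blast
    hence "U' = S \<inter> m" using SU_cap[OF U'(1) JU' U'(3)] by simp
    thus ?thesis by simp
  qed simp
  ultimately have "?U \<in> MaxU" using I JU unfolding MaxU_def by auto
  thus "S \<in> SU ` MaxU" using Sq by blast
next
  fix S assume "S \<in> SU ` MaxU"
  then obtain U where U: "U \<in> MaxU" "S = SU U" by blast
  have I: "is_ideal U" and JU: "J \<subseteq> U" and Um: "U \<subseteq> m" and Une: "U \<noteq> m"
    and mx: "\<forall>U'. is_ideal U' \<and> U \<subseteq> U' \<and> U' \<subseteq> m \<longrightarrow> U' = U \<or> U' = m"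
    using U(1) unfolding MaxU_def by auto
  have "\<not> (\<exists>T. is_subring T \<and> T \<noteq> UNIV \<and> S \<subset> T)"
  proof
    assume "\<exists>T. is_subring T \<and> T \<noteq> UNIV \<and> S \<subset> T"
    then obtain T where T: "is_subring T" "T \<noteq> UNIV" "S \<subset> T" by blast
    have JT: "J \<subseteq> T" using T(3) U(2) JU SU_m[OF I JU] J_m by blast
    have resT: "same_residue_field m T" using SU_res[OF JU] T(3) U(2)
      unfolding same_residue_field_def by blast
    have Tq: "T = SU (T \<inter> m)" using S_eq T(1) JT resT .
    have IT: "is_ideal (T \<inter> m)" using Sm_ideal T(1) JT resT .
    have "U \<subseteq> T \<inter> m" using T(3) U(2) SU_m[OF I JU] Um by blast
    hence "T \<inter> m = U \<or> T \<inter> m = m" using mx IT by blast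
    thus False
    proof
      assume "T \<inter> m = U" thus False using Tq T(3) U(2) by simp
    next
      assume "T \<inter> m = m"
      hence "T = SU m" using Tq by simp
      also have "SU m = UNIV" using E1 by (auto simp: SU_def)
      finally show False using T(2) by simp
    qed
  qed
  moreover have "is_subring S" using SU_sub[OF I JU] U(2) by simp
  moreover have "S \<noteq> UNIV" using SU_ne I JU Um Une U(2) by simp
  moreover have "same_residue_field m S" using SU_res[OF JU] U(2) by simp
  ultimately show "S \<in> {S. maximal_subring_same_residue m S}"
    unfolding maximal_subring_same_residue_def by simp
qed

end

lemma id_sum: assumes "is_ideal U"
  shows "finite A \<Longrightarrow> (\<And>i. i \<in> A \<Longrightarrow> f i \<in> U) \<Longrightarrow> sum f A \<in> U"
  by (induction A rule: finite_induct) (auto intro: id0[OF assms] id_add[OF assms])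

context L begin

definition Pe where "Pe e \<longleftrightarrow> (\<forall>i<\<rho>. e i \<in> m) \<and>
     (\<forall>x\<in>m. \<exists>a. x - (\<Sum>i<\<rho>. a i * e i) \<in> J) \<and>
     (\<forall>a. (\<Sum>i<\<rho>. a i * e i) \<in> J \<longrightarrow> (\<forall>i<\<rho>. a i \<in> m))"
definition ev where "ev = (SOME e. Pe e)"

lemma ev: "(\<forall>i<\<rho>. ev i \<in> m) \<and>
     (\<forall>x\<in>m. \<exists>a. x - (\<Sum>i<\<rho>. a i * ev i) \<in> J) \<and>
     (\<forall>a. (\<Sum>i<\<rho>. a i * ev i) \<in> J \<longrightarrow> (\<forall>i<\<rho>. a i \<in> m))"
proof -
  have "\<exists>e. Pe e" using dim unfolding cotangent_dim_def Pe_def by blast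
  hence "Pe ev" unfolding ev_def by (rule someI_ex)
  thus ?thesis unfolding Pe_def .
qed

definition lc :: "(nat \<Rightarrow> 'a) \<Rightarrow> 'a" where "lc a = (\<Sum>i<\<rho>. a i * ev i)"
definition pair :: "(nat \<Rightarrow> 'a) \<Rightarrow> (nat \<Rightarrow> 'a) \<Rightarrow> 'a" where "pair c a = (\<Sum>i<\<rho>. a i * c i)"

lemma ev_m: "i < \<rho> \<Longrightarrow> ev i \<in> m" using ev by blast
lemma span: "x \<in> m \<Longrightarrow> \<exists>a. x - lc a \<in> J" using ev unfolding lc_def by blast
lemma indep: "lc a \<in> J \<Longrightarrow> i < \<rho> \<Longrightarrow> a i \<in> m" using ev unfolding lc_def by blast

lemma lc_add: "lc (\<lambda>i. a i + b i) = lc a + lc b" unfolding lc_def by (simp add: distrib_right sum.distrib)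
lemma lc_diff: "lc (\<lambda>i. a i - b i) = lc a - lc b" unfolding lc_def by (simp add: left_diff_distrib sum_subtractf)
lemma lc_smul: "lc (\<lambda>i. r * a i) = r * lc a" unfolding lc_def by (simp add: sum_distrib_left mult.assoc)
lemma lc_0: "lc (\<lambda>i. 0) = 0" unfolding lc_def by simp
lemma lc_m: "lc a \<in> m" unfolding lc_def using ev_m by (intro m_sum) (auto intro: m_mult)
lemma lc_delta: assumes "j < \<rho>" shows "lc (\<lambda>i. if i = j then 1 else 0) = ev j"
proof -
  have "lc (\<lambda>i. if i = j then 1 else 0) = (\<Sum>k<\<rho>. if k = j then ev k else 0)"
    unfolding lc_def by (rule sum.cong) auto
  also have "\<dots> = ev j" using assms by (simp add: sum.delta)
  finally show ?thesis .
qed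

lemma pair_add: "pair c (\<lambda>i. a i + b i) = pair c a + pair c b" unfolding pair_def by (simp add: distrib_right sum.distrib)
lemma pair_diff: "pair c (\<lambda>i. a i - b i) = pair c a - pair c b" unfolding pair_def by (simp add: left_diff_distrib sum_subtractf)
lemma pair_smul: "pair c (\<lambda>i. r * a i) = r * pair c a" unfolding pair_def by (simp add: sum_distrib_left mult.assoc)
lemma pair_0: "pair c (\<lambda>i. 0) = 0" unfolding pair_def by simp
lemma pair_delta: assumes "j < \<rho>" shows "pair c (\<lambda>i. if i = j then 1 else 0) = c j"
proof -
  have "pair c (\<lambda>i. if i = j then 1 else 0) = (\<Sum>k<\<rho>. if k = j then c k else 0)"
    unfolding pair_def by (rule sum.cong) auto
  also have "\<dots> = c j" using assms by (simp add: sum.delta)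
  finally show ?thesis .
qed

lemma pair_wd: assumes "x - lc a \<in> J" "x - lc b \<in> J" shows "pair c a - pair c b \<in> m"
proof -
  have "lc (\<lambda>i. a i - b i) \<in> J" unfolding lc_diff using J_diff[OF assms(2) assms(1)] by simp
  hence "\<forall>i<\<rho>. a i - b i \<in> m" using indep by blast
  hence "pair c (\<lambda>i. a i - b i) \<in> m" unfolding pair_def by (intro m_sum) (auto intro: m_mult2)
  thus ?thesis by (simp add: pair_diff)
qed

definition UC :: "(nat \<Rightarrow> 'a) \<Rightarrow> 'a set" where
  "UC c = {x. x \<in> m \<and> (\<exists>a. x - lc a \<in> J \<and> pair c a \<in> m)}"

lemma UC_iff: assumes "x - lc a \<in> J" shows "x \<in> UC c \<longleftrightarrow> pair c a \<in> m"
proof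
  assume "x \<in> UC c"
  then obtain b where b: "x - lc b \<in> J" "pair c b \<in> m" unfolding UC_def by blast
  have "pair c a - pair c b \<in> m" using pair_wd assms b(1) .
  hence "(pair c a - pair c b) + pair c b \<in> m" using b(2) m_add by blast
  thus "pair c a \<in> m" by simp
next
  assume h: "pair c a \<in> m"
  have "(x - lc a) + lc a \<in> m" using J_m[OF assms] lc_m m_add by blast
  thus "x \<in> UC c" using h assms unfolding UC_def by auto
qed

lemma UC_m: "UC c \<subseteq> m" unfolding UC_def by auto

lemma UC_J: "J \<subseteq> UC c"
proof
  fix x assume x: "x \<in> J"
  hence "x - lc (\<lambda>i. 0) \<in> J" by (simp add: lc_0)
  thus "x \<in> UC c" using UC_iff pair_0 m0 by simp
qed

lemma UC_ideal: "is_ideal (UC c)"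
  unfolding is_ideal_def
proof (intro conjI ballI allI)
  show "0 \<in> UC c" using UC_J J0 by blast
next
  fix x y assume x: "x \<in> UC c" and y: "y \<in> UC c"
  obtain a where a: "x - lc a \<in> J" using span x UC_m by blast
  obtain b where b: "y - lc b \<in> J" using span y UC_m by blast
  have "(x + y) - lc (\<lambda>i. a i + b i) \<in> J" using J_add[OF a b] by (simp add: lc_add algebra_simps)
  moreover have "pair c (\<lambda>i. a i + b i) \<in> m" using x y a b UC_iff by (simp add: pair_add m_add)
  ultimately show "x + y \<in> UC c" using UC_iff by blast
next
  fix x r assume x: "x \<in> UC c"
  obtain a where a: "x - lc a \<in> J" using span x UC_m by blast
  have "r * x - lc (\<lambda>i. r * a i) \<in> J" using J_mult[OF a, of r] by (simp add: lc_smul algebra_simps)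
  moreover have "pair c (\<lambda>i. r * a i) \<in> m" using x a UC_iff by (simp add: pair_smul m_mult)
  ultimately show "r * x \<in> UC c" using UC_iff by blast
qed

lemma UC_ne: assumes "i < \<rho>" "c i \<notin> m" shows "UC c \<noteq> m"
proof
  assume h: "UC c = m"
  have "ev i - lc (\<lambda>k. if k = i then 1 else 0) \<in> J" using lc_delta[OF assms(1)] J0 by simp
  hence "ev i \<in> UC c \<longleftrightarrow> c i \<in> m" using UC_iff pair_delta[OF assms(1)] by simp
  thus False using h ev_m assms by auto
qed

lemma UC_max: assumes i: "i < \<rho>" "c i \<notin> m" shows "UC c \<in> MaxU"
proof -
  have "U' = UC c \<or> U' = m" if U': "is_ideal U'" "UC c \<subseteq> U'" "U' \<subseteq> m" for U'
  proof (cases "U' = UC c")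
    case False
    then obtain y where y: "y \<in> U'" "y \<notin> UC c" using U' by blast
    have ym: "y \<in> m" using y U' by blast
    obtain b where b: "y - lc b \<in> J" using span ym by blast
    have "pair c b \<notin> m" using y(2) UC_iff[OF b] by simp
    then obtain \<beta>' where \<beta>': "pair c b * \<beta>' = 1" using unit by blast
    have "x \<in> U'" if x: "x \<in> m" for x
    proof -
      obtain a where a: "x - lc a \<in> J" using span x by blast
      define \<gamma> where "\<gamma> = pair c a * \<beta>'"
      have "(x - \<gamma> * y) - lc (\<lambda>i. a i - \<gamma> * b i) = (x - lc a) - \<gamma> * (y - lc b)"
        by (simp add: lc_diff lc_smul algebra_simps)
      hence z1: "(x - \<gamma> * y) - lc (\<lambda>i. a i - \<gamma> * b i) \<in> J" using a b J_diff J_mult by metis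
      have "\<gamma> * pair c b = pair c a" unfolding \<gamma>_def using \<beta>'
        by (metis mult.assoc mult.commute mult.right_neutral)
      hence "pair c (\<lambda>i. a i - \<gamma> * b i) = 0" by (simp add: pair_diff pair_smul)
      hence "x - \<gamma> * y \<in> UC c" using UC_iff[OF z1] m0 by simp
      hence "x - \<gamma> * y \<in> U'" using U' by blast
      moreover have "\<gamma> * y \<in> U'" using y U' id_mult by blast
      ultimately have "(x - \<gamma> * y) + \<gamma> * y \<in> U'" using U' id_add by blast
      thus ?thesis by simp
    qed
    thus ?thesis using U' by blast
  qed simp
  thus ?thesis unfolding MaxU_def using UC_ideal UC_J UC_m UC_ne[of i c] i by auto
qed

end

context L begin

definition "Vec = Pi\<^sub>E {..<\<rho>} (\<lambda>_. Rep)"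
definition "zv = restrict (\<lambda>_. 0) {..<\<rho>}"
definition "NZ = Vec - {zv}"

lemma zv_Vec: "zv \<in> Vec" unfolding zv_def Vec_def using Rep_0 by auto

lemma NZ_ex: assumes "c \<in> NZ" shows "\<exists>i<\<rho>. c i \<notin> m"
proof (rule ccontr)
  assume h: "\<not> (\<exists>i<\<rho>. c i \<notin> m)"
  have cV: "c \<in> Vec" "c \<noteq> zv" using assms unfolding NZ_def by auto
  have "c i = zv i" for i
  proof (cases "i < \<rho>")
    case True
    have "c i \<in> Rep" using cV(1) True unfolding Vec_def by (intro PiE_mem[of c]) auto
    moreover have "c i \<in> m" using h True by blast
    ultimately have "c i = 0" using Rep_nz by blast
    thus ?thesis using True unfolding zv_def by simp
  next
    case False
    have "c i = undefined" using cV(1) False unfolding Vec_def by (intro PiE_arb[of c]) auto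
    thus ?thesis using False unfolding zv_def by simp
  qed
  hence "c = zv" by (rule ext)
  thus False using cV by simp
qed

lemma NZ_I: assumes "c \<in> Vec" "i < \<rho>" "c i \<notin> m" shows "c \<in> NZ"
proof -
  have "zv i = 0" using assms(2) unfolding zv_def by simp
  have "c \<noteq> zv"
  proof
    assume "c = zv" hence "c i = 0" using \<open>zv i = 0\<close> by simp
    thus False using assms(3) m0 by simp
  qed
  thus ?thesis using assms unfolding NZ_def by simp
qed

lemma MaxU_UC: assumes U: "U \<in> MaxU" shows "\<exists>c\<in>NZ. U = UC c"
proof -
  have I: "is_ideal U" and JU: "J \<subseteq> U" and Um: "U \<subseteq> m" and Une: "U \<noteq> m"
    and mx: "\<forall>U'. is_ideal U' \<and> U \<subseteq> U' \<and> U' \<subseteq> m \<longrightarrow> U' = U \<or> U' = m"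
    using U unfolding MaxU_def by auto
  have "\<exists>i0<\<rho>. ev i0 \<notin> U"
  proof (rule ccontr)
    assume "\<not> (\<exists>i0<\<rho>. ev i0 \<notin> U)"
    hence all: "\<forall>i<\<rho>. ev i \<in> U" by blast
    have "x \<in> U" if x: "x \<in> m" for x
    proof -
      obtain a where a: "x - lc a \<in> J" using span x by blast
      have "lc a \<in> U" unfolding lc_def using all I by (intro id_sum) (auto intro: id_mult)
      hence "(x - lc a) + lc a \<in> U" using a JU I id_add by blast
      thus ?thesis by simp
    qed
    thus False using Um Une by blast
  qed
  then obtain i0 where i0: "i0 < \<rho>" "ev i0 \<notin> U" by blast
  define I' where "I' = {u + r * ev i0 | u r. u \<in> U}"
  have I'I: "is_ideal I'" unfolding is_ideal_def I'_def
  proof (intro conjI ballI allI)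
    show "0 \<in> {u + r * ev i0 |u r. u \<in> U}" using id0[OF I] by (metis (mono_tags, lifting) add_0 mem_Collect_eq mult_zero_left)
  next
    fix x y assume "x \<in> {u + r * ev i0 |u r. u \<in> U}" "y \<in> {u + r * ev i0 |u r. u \<in> U}"
    then obtain u r u' r' where "x = u + r * ev i0" "y = u' + r' * ev i0" "u \<in> U" "u' \<in> U" by blast
    moreover have "x + y = (u + u') + (r + r') * ev i0" using calculation by (simp add: algebra_simps)
    ultimately show "x + y \<in> {u + r * ev i0 |u r. u \<in> U}" using id_add[OF I] by blast
  next
    fix x t assume "x \<in> {u + r * ev i0 |u r. u \<in> U}"
    then obtain u r where "x = u + r * ev i0" "u \<in> U" by blast
    moreover have "t * x = (t * u) + (t * r) * ev i0" using calculation by (simp add: algebra_simps)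
    ultimately show "t * x \<in> {u + r * ev i0 |u r. u \<in> U}" using id_mult[OF I] by blast
  qed
  have UI': "U \<subseteq> I'"
  proof
    fix u assume "u \<in> U" moreover have "u = u + 0 * ev i0" by simp
    ultimately show "u \<in> I'" unfolding I'_def by blast
  qed
  have I'm: "I' \<subseteq> m" unfolding I'_def using Um ev_m[OF i0(1)] m_add m_mult by blast
  have "ev i0 \<in> I'" unfolding I'_def using id0[OF I] by (metis (mono_tags, lifting) add_0 mem_Collect_eq mult_1)
  hence "I' \<noteq> U" using i0 by blast
  hence I'eq: "I' = m" using mx I'I UI' I'm by blast
  have exr: "\<exists>r. ev j - r * ev i0 \<in> U" if j: "j < \<rho>" for j
  proof -
    have "ev j \<in> I'" using I'eq ev_m j by blast
    then obtain u r where "ev j = u + r * ev i0" "u \<in> U" unfolding I'_def by blast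
    hence "ev j - r * ev i0 = u" by simp
    thus ?thesis using \<open>u \<in> U\<close> by blast
  qed
  define r where "r j = (SOME r. ev j - r * ev i0 \<in> U)" for j
  have r: "ev j - r j * ev i0 \<in> U" if "j < \<rho>" for j
    unfolding r_def using someI_ex[OF exr[OF that]] .
  define c where "c = restrict (\<lambda>j. rep (r j)) {..<\<rho>}"
  have cV: "c \<in> Vec" unfolding c_def Vec_def using rep_in by auto
  have cj: "ev j - c j * ev i0 \<in> U" if j: "j < \<rho>" for j
  proof -
    have "(r j - rep (r j)) * ev i0 \<in> J" using rep_cong ev_m[OF i0(1)] m2_J by blast
    hence "(ev j - r j * ev i0) + (r j - rep (r j)) * ev i0 \<in> U" using r[OF j] JU id_add[OF I] by blast
    moreover have "(ev j - r j * ev i0) + (r j - rep (r j)) * ev i0 = ev j - c j * ev i0"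
      using j unfolding c_def by (simp add: algebra_simps)
    ultimately show ?thesis by simp
  qed
  have key: "x - pair c a * ev i0 \<in> U" if a: "x - lc a \<in> J" for x a
  proof -
    have "(\<Sum>j<\<rho>. a j * (ev j - c j * ev i0)) = (\<Sum>j<\<rho>. a j * ev j) - (\<Sum>j<\<rho>. a j * c j) * ev i0"
      by (simp add: right_diff_distrib sum_subtractf sum_distrib_right mult.assoc)
    hence "lc a - pair c a * ev i0 = (\<Sum>j<\<rho>. a j * (ev j - c j * ev i0))"
      unfolding lc_def pair_def by simp
    moreover have "(\<Sum>j<\<rho>. a j * (ev j - c j * ev i0)) \<in> U" using cj I by (intro id_sum) (auto intro: id_mult)
    ultimately have "(x - lc a) + (lc a - pair c a * ev i0) \<in> U" using a JU id_add[OF I] by auto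
    thus ?thesis by simp
  qed
  have "U = UC c"
  proof (intro equalityI subsetI)
    fix x assume x: "x \<in> U"
    obtain a where a: "x - lc a \<in> J" using span x Um by blast
    have "pair c a \<in> m"
    proof (rule ccontr)
      assume "pair c a \<notin> m"
      then obtain \<alpha>' where \<alpha>': "pair c a * \<alpha>' = 1" using unit by blast
      have "x - (x - pair c a * ev i0) \<in> U" using key[OF a] x id_diff[OF I] by blast
      hence "\<alpha>' * (pair c a * ev i0) \<in> U" using id_mult[OF I] by simp
      moreover have "\<alpha>' * (pair c a * ev i0) = ev i0" using \<alpha>'
        by (metis mult.assoc mult.commute mult_1)
      ultimately show False using i0 by simp
    qed
    thus "x \<in> UC c" using UC_iff[OF a] by simp
  next
    fix x assume x: "x \<in> UC c"
    hence xm: "x \<in> m" using UC_m by blast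
    obtain a where a: "x - lc a \<in> J" using span xm by blast
    have "pair c a \<in> m" using UC_iff[OF a] x by simp
    hence "pair c a * ev i0 \<in> U" using m2_J ev_m[OF i0(1)] JU by blast
    hence "(x - pair c a * ev i0) + pair c a * ev i0 \<in> U" using key[OF a] id_add[OF I] by blast
    thus "x \<in> U" by simp
  qed
  moreover have "c \<in> NZ"
  proof (rule ccontr)
    assume "c \<notin> NZ"
    hence "c = zv" using cV unfolding NZ_def by simp
    hence "\<forall>a. pair c a = 0" unfolding zv_def pair_def by simp
    have "x \<in> UC c" if xm: "x \<in> m" for x
    proof -
      obtain a where a: "x - lc a \<in> J" using span xm by blast
      show ?thesis using UC_iff[OF a] \<open>\<forall>a. pair c a = 0\<close> m0 by simp
    qed
    hence "UC c = m" using UC_m by blast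
    thus False using \<open>U = UC c\<close> Une by simp
  qed
  ultimately show ?thesis by blast
qed

end

context L begin

definition scale :: "'a \<Rightarrow> (nat \<Rightarrow> 'a) \<Rightarrow> (nat \<Rightarrow> 'a)" where
  "scale l c = restrict (\<lambda>i. rep (l * c i)) {..<\<rho>}"

lemma mult_notin_iff: "l \<notin> m \<Longrightarrow> (l * z \<in> m \<longleftrightarrow> z \<in> m)"
  using prime_m m_mult by blast

lemma Rep_in_Vec: "c \<in> Vec \<Longrightarrow> j < \<rho> \<Longrightarrow> c j \<in> Rep"
  unfolding Vec_def by (intro PiE_mem[of c]) auto

lemma scale_props: assumes c: "c \<in> NZ" and l: "l \<in> Rep" "l \<noteq> 0"
  shows "scale l c \<in> NZ \<and> UC (scale l c) = UC c"
proof -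
  have lm: "l \<notin> m" using Rep_nz l by blast
  obtain i where i: "i < \<rho>" "c i \<notin> m" using NZ_ex c by blast
  have sV: "scale l c \<in> Vec" unfolding scale_def Vec_def using rep_in by auto
  have "l * c i \<notin> m" using lm i mult_notin_iff by blast
  hence "rep (l * c i) \<noteq> 0" using rep_0_iff by blast
  hence "rep (l * c i) \<notin> m" using Rep_nz rep_in by blast
  hence "scale l c i \<notin> m" using i unfolding scale_def by simp
  hence NZs: "scale l c \<in> NZ" using NZ_I sV i by blast
  have pw: "pair (scale l c) a - l * pair c a \<in> m" for a
  proof -
    have e1: "pair (scale l c) a = (\<Sum>j<\<rho>. a j * rep (l * c j))"
      unfolding pair_def scale_def by (rule sum.cong) auto
    have e2: "l * pair c a = (\<Sum>j<\<rho>. a j * (l * c j))"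
      unfolding pair_def sum_distrib_left by (rule sum.cong) (auto simp: ac_simps)
    have "pair (scale l c) a - l * pair c a = (\<Sum>j<\<rho>. a j * (rep (l * c j) - l * c j))"
      unfolding e1 e2 by (simp add: sum_subtractf right_diff_distrib)
    moreover have "rep y - y \<in> m" for y using rep_cong[of y] m_neg by (metis minus_diff_eq)
    hence "(\<Sum>j<\<rho>. a j * (rep (l * c j) - l * c j)) \<in> m"
      by (intro m_sum) (auto intro: m_mult)
    ultimately show ?thesis by simp
  qed
  have "x \<in> UC (scale l c) \<longleftrightarrow> x \<in> UC c" for x
  proof (cases "x \<in> m")
    case False thus ?thesis using UC_m by blast
  next
    case True
    obtain a where a: "x - lc a \<in> J" using span True by blast
    have "pair (scale l c) a \<in> m \<longleftrightarrow> l * pair c a \<in> m"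
    proof
      assume "pair (scale l c) a \<in> m"
      hence "pair (scale l c) a - (pair (scale l c) a - l * pair c a) \<in> m" using pw m_diff by blast
      thus "l * pair c a \<in> m" by simp
    next
      assume "l * pair c a \<in> m"
      hence "(pair (scale l c) a - l * pair c a) + l * pair c a \<in> m" using pw m_add by blast
      thus "pair (scale l c) a \<in> m" by simp
    qed
    thus ?thesis using UC_iff[OF a] mult_notin_iff[OF lm] by simp
  qed
  thus ?thesis using NZs by blast
qed

lemma fiber_sub: assumes c: "c \<in> NZ" and d: "d \<in> NZ" and eq: "UC d = UC c"
  shows "\<exists>l \<in> Rep - {0}. d = scale l c"
proof -
  obtain i where i: "i < \<rho>" "c i \<notin> m" using NZ_ex c by blast
  obtain ci' where ci': "c i * ci' = 1" using unit i by blast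
  define l where "l = rep (d i * ci')"
  have dV: "d \<in> Vec" using d unfolding NZ_def by simp
  have dj: "d j - l * c j \<in> m" if j: "j < \<rho>" for j
  proof -
    define a where "a = (\<lambda>k. c i * (if k = j then 1 else 0) - c j * (if k = i then 1 else 0))"
    have "lc a = c i * ev j - c j * ev i"
      unfolding a_def lc_diff lc_smul lc_delta[OF j] lc_delta[OF i(1)] by simp
    hence xa: "(c i * ev j - c j * ev i) - lc a \<in> J" using J0 by simp
    have "pair c a = c i * c j - c j * c i"
      unfolding a_def pair_diff pair_smul pair_delta[OF j] pair_delta[OF i(1)] by simp
    hence "pair c a \<in> m" using m0 by (simp add: mult.commute)
    hence "c i * ev j - c j * ev i \<in> UC d" using UC_iff[OF xa] eq by simp
    hence "pair d a \<in> m" using UC_iff[OF xa] by simp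
    moreover have "pair d a = c i * d j - c j * d i"
      unfolding a_def pair_diff pair_smul pair_delta[OF j] pair_delta[OF i(1)] by simp
    ultimately have h1: "c i * d j - c j * d i \<in> m" by simp
    have h2: "d i * ci' - l \<in> m" unfolding l_def by (rule rep_cong)
    have "ci' * (c i * d j - c j * d i) + (d i * ci' - l) * c j \<in> m"
      using h1 h2 m_add m_mult m_mult2 by blast
    moreover have "ci' * (c i * d j - c j * d i) + (d i * ci' - l) * c j = (c i * ci') * d j - l * c j"
      by (simp add: algebra_simps)
    ultimately show ?thesis using ci' by simp
  qed
  have "d j = scale l c j" for j
  proof (cases "j < \<rho>")
    case True
    have "rep (d j) = rep (l * c j)" using dj[OF True] by (rule rep_eq)
    moreover have "rep (d j) = d j" using Rep_rep Rep_in_Vec[OF dV True] by blast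
    ultimately show ?thesis using True unfolding scale_def by simp
  next
    case False
    have "d j = undefined" using dV False unfolding Vec_def by (intro PiE_arb[of d]) auto
    thus ?thesis using False unfolding scale_def by simp
  qed
  hence dl: "d = scale l c" by (rule ext)
  have "l \<noteq> 0"
  proof
    assume "l = 0"
    hence "\<forall>j<\<rho>. d j \<in> m" using dj by simp
    thus False using NZ_ex d by blast
  qed
  moreover have "l \<in> Rep" unfolding l_def by (rule rep_in)
  ultimately show ?thesis using dl by blast
qed

lemma scale_inj: assumes c: "c \<in> NZ" shows "inj_on (\<lambda>l. scale l c) (Rep - {0})"
proof (rule inj_onI)
  fix l l' assume l: "l \<in> Rep - {0}" and l': "l' \<in> Rep - {0}" and eq: "scale l c = scale l' c"
  obtain i where i: "i < \<rho>" "c i \<notin> m" using NZ_ex c by blast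
  have "rep (l * c i) = rep (l' * c i)" using fun_cong[OF eq, of i] i unfolding scale_def by simp
  hence "l * c i - l' * c i \<in> m" by (simp add: rep_eq_iff)
  hence "(l - l') * c i \<in> m" by (simp add: left_diff_distrib)
  hence "c i * (l - l') \<in> m" by (simp add: mult.commute)
  hence "l - l' \<in> m" using i prime_m by blast
  hence "rep l = rep l'" by (rule rep_eq)
  thus "l = l'" using l l' Rep_rep by auto
qed

lemma fiber_card: assumes c: "c \<in> NZ" shows "card {d \<in> NZ. UC d = UC c} = card Rep - 1"
proof -
  have "{d \<in> NZ. UC d = UC c} = (\<lambda>l. scale l c) ` (Rep - {0})"
  proof (intro equalityI subsetI)
    fix d assume "d \<in> {d \<in> NZ. UC d = UC c}"
    then obtain l where "l \<in> Rep - {0}" "d = scale l c" using fiber_sub[OF c] by blast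
    thus "d \<in> (\<lambda>l. scale l c) ` (Rep - {0})" by blast
  next
    fix d assume "d \<in> (\<lambda>l. scale l c) ` (Rep - {0})"
    then obtain l where l: "l \<in> Rep" "l \<noteq> 0" "d = scale l c" by blast
    thus "d \<in> {d \<in> NZ. UC d = UC c}" using scale_props[OF c l(1,2)] by simp
  qed
  hence "card {d \<in> NZ. UC d = UC c} = card (Rep - {0})" using card_image[OF scale_inj[OF c]] by simp
  also have "\<dots> = card Rep - 1" using Rep_0 Rep_finite by simp
  finally show ?thesis .
qed

lemma MaxU_img: "MaxU = UC ` NZ"
proof (intro equalityI subsetI)
  fix U assume "U \<in> MaxU"
  then obtain c where "c \<in> NZ" "U = UC c" using MaxU_UC by blast
  thus "U \<in> UC ` NZ" by blast
next
  fix U assume "U \<in> UC ` NZ"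
  then obtain c where c: "c \<in> NZ" "U = UC c" by blast
  then obtain i where "i < \<rho>" "c i \<notin> m" using NZ_ex by blast
  thus "U \<in> MaxU" using UC_max c(2) by simp
qed

lemma count: "finite MaxU \<and> card MaxU * (card Rep - 1) = card Rep ^ \<rho> - 1"
proof -
  have finV: "finite Vec" unfolding Vec_def using Rep_finite by (simp add: finite_PiE)
  hence finNZ: "finite NZ" unfolding NZ_def by simp
  hence finM: "finite MaxU" using MaxU_img by simp
  define F where "F U = {d \<in> NZ. UC d = U}" for U
  have "NZ = \<Union> (F ` MaxU)" unfolding F_def using MaxU_img by auto
  moreover have "card (\<Union> (F ` MaxU)) = (\<Sum>U\<in>MaxU. card (F U))"
  proof (rule card_UN_disjoint)
    show "finite MaxU" by (rule finM)
    show "\<forall>U\<in>MaxU. finite (F U)" using finNZ unfolding F_def by auto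
    show "\<forall>U\<in>MaxU. \<forall>V\<in>MaxU. U \<noteq> V \<longrightarrow> F U \<inter> F V = {}" unfolding F_def by auto
  qed
  ultimately have "card NZ = (\<Sum>U\<in>MaxU. card (F U))" by simp
  also have "\<dots> = (\<Sum>U\<in>MaxU. card Rep - 1)"
  proof (rule sum.cong)
    fix U assume "U \<in> MaxU"
    then obtain c where "c \<in> NZ" "U = UC c" using MaxU_img by blast
    thus "card (F U) = card Rep - 1" unfolding F_def using fiber_card by simp
  qed simp
  also have "\<dots> = card MaxU * (card Rep - 1)" by simp
  finally have a: "card NZ = card MaxU * (card Rep - 1)" .
  have "card Vec = card Rep ^ \<rho>" unfolding Vec_def by (simp add: card_PiE)
  hence "card NZ = card Rep ^ \<rho> - 1" unfolding NZ_def using zv_Vec finV by simp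
  thus ?thesis using a finM by simp
qed

lemma Rep_ge2: "card Rep \<ge> 2"
proof -
  have "rep 1 \<noteq> 0" using rep_0_iff one_notin by blast
  hence "card {0, rep 1} = 2" by simp
  moreover have "{0, rep 1} \<subseteq> Rep" using Rep_0 rep_in by auto
  moreover have "card {0, rep 1} \<le> card Rep" using card_mono[OF Rep_finite] calculation(2) .
  ultimately show ?thesis by simp
qed

end

theorem corollary31:
  fixes m :: "'a::comm_ring_1 set" and p N q \<rho> :: nat
  assumes "is_local_with m"
    and "prime p" and "N \<ge> 1" and "CHAR('a) = p ^ N"
    and "finite (residue_classes m)" and "card (residue_classes m) = q"
    and "nilpotent_ideal m"
    and "cotangent_dim m p \<rho>"
  shows "finite {S. maximal_subring_same_residue m S} \<and>
         card {S. maximal_subring_same_residue m S} = (q ^ \<rho> - 1) div (q - 1)"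
proof -
  have ch: "of_nat (p ^ N) = (0::'a)" using assms(4) of_nat_CHAR[where 'a='a] by simp
  have mx: "is_maximal_ideal m" using assms(1) unfolding is_local_with_def by blast
  interpret L m p N \<rho>
    by (rule L.intro[OF mx assms(2) ch assms(7) assms(8) assms(5)])
  have q: "card Rep = q" using Rep_card assms(6) by simp
  have c: "finite MaxU" "card MaxU * (q - 1) = q ^ \<rho> - 1" using count q by auto
  have q2: "q - 1 > 0" using Rep_ge2 q by simp
  have "card {S. maximal_subring_same_residue m S} = card MaxU"
    unfolding maxsub_eq using card_image[OF SU_inj] .
  also have "\<dots> = (card MaxU * (q - 1)) div (q - 1)" using q2 by simp
  also have "\<dots> = (q ^ \<rho> - 1) div (q - 1)" using c(2) by simp
  finally show ?thesis unfolding maxsub_eq using c(1) by simp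
qed

end
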